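(* There is an absolute constant $C$ such that for every simple temporal clique on $n$ vertices and every bidirectional fireworks cover $S$ of it (for any outcome of the arbitrary choices in the constructions), $|S|\le \frac{1}{2}\binom{n}{2}+Cn$.
   Context: A simple temporal clique is a pair $\mathcal{G}=(G,\lambda)$ where $G=(V,E)$ is the complete graph on a finite set $V$ of $n$ vertices and $\lambda:E\to\mathbb{N}$ assigns to each edge a single integer label such that any two distinct edges sharing an endpoint have different labels; the label of an arc $(x,y)$ is $\lambda(\{x,y\})$. For a vertex $v$, $e^-(v)$ (resp. $e^+(v)$) is the edge incident to $v$ with smallest (resp. largest) label. Forward construction: let $E^-$ be the set of arcs $(u,v)$ with $\{u,v\}=e^-(v)$, except that if $e^-(u)=e^-(v)=\{u,v\}$ only one of $(u,v),(v,u)$ is included (arbitrarily). Initialize $E^-_T:=E^-$; for every vertex $v$ of out-degree at least $2$ in $(V,E^-)$, with out-arcs $(v,u_1),\dots,(v,u_\ell)$ where $(v,u_\ell)$ has the largest label, for each $i<\ell$: if $u_i$ has out-degree $0$ in $(V,E^-)$ replace $(v,u_i)$ by $(u_i,v)$ in $E^-_T$, otherwise remove $(v,u_i)$ from $E^-_T$. Emitters ($X^-$) are vertices of out-degree $0$ in $(V,E^-_T)$. Backward construction: let $E^+$ be the set of arcs $(v,u)$ with $\{u,v\}=e^+(v)$, except that if $e^+(u)=e^+(v)=\{u,v\}$ only one of $(u,v),(v,u)$ is included (arbitrarily). Initialize $E^+_T:=E^+$; for every vertex $v$ of in-degree at least $2$ in $(V,E^+)$, with in-arcs $(u_1,v),\dots,(u_\ell,v)$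 where $(u_\ell,v)$ has the smallest label, for each $i<\ell$: if $u_i$ has in-degree $0$ in $(V,E^+)$ replace $(u_i,v)$ by $(v,u_i)$ in $E^+_T$, otherwise remove $(u_i,v)$ from $E^+_T$. Collectors ($X^+$) are vertices of in-degree $0$ in $(V,E^+_T)$. The bidirectional fireworks cover is $S=\{\{u,v\}:(u,v)\in E^-_T\cup E^+_T\}\cup\{\{u,v\}\in E: u\in X^-, v\in X^+\}$. *)

theory Defs
  imports Complex_Main
begin

text \<open>A simple temporal clique on the finite vertex set V (vertices are naturals; any
finite set can be relabelled this way).\<close>

definition simple_temporal_clique :: "nat set \<Rightarrow> (nat set \<Rightarrow> nat) \<Rightarrow> bool" where
  "simple_temporal_clique V lam \<longleftrightarrow> finite V \<and>
     (\<forall>x\<in>V. \<forall>y\<in>V. \<forall>z\<in>V. x \<noteq> y \<and> x \<noteq> z \<and> y \<noteq> z \<longrightarrow> lam {x,y} \<noteq> lam {x,z})"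

text \<open>Candidate arcs: (u,v) with {u,v} = e^-(v), i.e. the edge of minimum label at v.\<close>
definition Eminus_cand :: "nat set \<Rightarrow> (nat set \<Rightarrow> nat) \<Rightarrow> (nat \<times> nat) set" where
  "Eminus_cand V lam = {(u,v). u \<in> V \<and> v \<in> V \<and> u \<noteq> v \<and>
      (\<forall>w\<in>V. w \<noteq> v \<longrightarrow> lam {u,v} \<le> lam {v,w})}"

text \<open>Candidate arcs: (v,u) with {u,v} = e^+(v), i.e. the edge of maximum label at v.\<close>
definition Eplus_cand :: "nat set \<Rightarrow> (nat set \<Rightarrow> nat) \<Rightarrow> (nat \<times> nat) set" where
  "Eplus_cand V lam = {(v,u). u \<in> V \<and> v \<in> V \<and> u \<noteq> v \<and>
      (\<forall>w\<in>V. w \<noteq> v \<longrightarrow> lam {v,w} \<le> lam {v,u})}"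

text \<open>A valid outcome of the arbitrary choice: from each mutual pair exactly one arc is kept,
all other candidate arcs are kept.\<close>
definition valid_choice :: "(nat \<times> nat) set \<Rightarrow> (nat \<times> nat) set \<Rightarrow> bool" where
  "valid_choice Cand A \<longleftrightarrow> A \<subseteq> Cand \<and>
     (\<forall>(u,v)\<in>Cand. (u,v) \<in> A \<or> (v,u) \<in> A) \<and>
     (\<forall>(u,v)\<in>A. (v,u) \<notin> A)"

definition out_deg_ge2 :: "(nat \<times> nat) set \<Rightarrow> nat \<Rightarrow> bool" where
  "out_deg_ge2 A v \<longleftrightarrow> (\<exists>w1 w2. w1 \<noteq> w2 \<and> (v,w1) \<in> A \<and> (v,w2) \<in> A)"

definition in_deg_ge2 :: "(nat \<times> nat) set \<Rightarrow> nat \<Rightarrow> bool" where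
  "in_deg_ge2 A v \<longleftrightarrow> (\<exists>w1 w2. w1 \<noteq> w2 \<and> (w1,v) \<in> A \<and> (w2,v) \<in> A)"

definition forward_T :: "(nat set \<Rightarrow> nat) \<Rightarrow> (nat \<times> nat) set \<Rightarrow> (nat \<times> nat) set" where
  "forward_T lam Em =
     {(v,u). (v,u) \<in> Em \<and> (\<not> out_deg_ge2 Em v \<or> (\<forall>w. (v,w) \<in> Em \<longrightarrow> lam {v,w} \<le> lam {v,u}))}
   \<union> {(u,v). (v,u) \<in> Em \<and> out_deg_ge2 Em v \<and> \<not> (\<forall>w. (v,w) \<in> Em \<longrightarrow> lam {v,w} \<le> lam {v,u})
            \<and> (\<forall>w. (u,w) \<notin> Em)}"

definition backward_T :: "(nat set \<Rightarrow> nat) \<Rightarrow> (nat \<times> nat) set \<Rightarrow> (nat \<times> nat) set" where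
  "backward_T lam Ep =
     {(u,v). (u,v) \<in> Ep \<and> (\<not> in_deg_ge2 Ep v \<or> (\<forall>w. (w,v) \<in> Ep \<longrightarrow> lam {u,v} \<le> lam {w,v}))}
   \<union> {(v,u). (u,v) \<in> Ep \<and> in_deg_ge2 Ep v \<and> \<not> (\<forall>w. (w,v) \<in> Ep \<longrightarrow> lam {u,v} \<le> lam {w,v})
            \<and> (\<forall>w. (w,u) \<notin> Ep)}"

definition emitters :: "nat set \<Rightarrow> (nat \<times> nat) set \<Rightarrow> nat set" where
  "emitters V EmT = {v \<in> V. \<forall>w. (v,w) \<notin> EmT}"

definition collectors :: "nat set \<Rightarrow> (nat \<times> nat) set \<Rightarrow> nat set" where
  "collectors V EpT = {v \<in> V. \<forall>w. (w,v) \<notin> EpT}"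

definition fireworks_cover ::
  "nat set \<Rightarrow> (nat set \<Rightarrow> nat) \<Rightarrow> (nat \<times> nat) set \<Rightarrow> (nat \<times> nat) set \<Rightarrow> nat set set" where
  "fireworks_cover V lam Em Ep =
     (let EmT = forward_T lam Em; EpT = backward_T lam Ep;
          Xm = emitters V EmT; Xp = collectors V EpT
      in {{u,v} | u v. (u,v) \<in> EmT \<union> EpT} \<union> {{u,v} | u v. u \<in> Xm \<and> v \<in> Xp \<and> u \<noteq> v})"

end

theory Submission
  imports Defs
begin

lemma ex_max_img:
  fixes f :: "'a \<Rightarrow> nat"
  assumes "finite S" "S \<noteq> {}"
  shows "\<exists>x\<in>S. \<forall>y\<in>S. f y \<le> f x"
proof -
  have "Max (f ` S) \<in> f ` S" using assms by simp
  then obtain x where x: "x \<in> S" "f x = Max (f ` S)" by auto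
  then show ?thesis using assms by (metis Max_ge finite_imageI imageI)
qed

lemma ex_min_img:
  fixes f :: "'a \<Rightarrow> nat"
  assumes "finite S" "S \<noteq> {}"
  shows "\<exists>x\<in>S. \<forall>y\<in>S. f x \<le> f y"
proof -
  have "Min (f ` S) \<in> f ` S" using assms by simp
  then obtain x where x: "x \<in> S" "f x = Min (f ` S)" by auto
  then show ?thesis using assms by (metis Min_le finite_imageI imageI)
qed

lemma dlab:
  assumes "simple_temporal_clique V lam" "x\<in>V" "y\<in>V" "z\<in>V" "x\<noteq>y" "x\<noteq>z" "y\<noteq>z"
  shows "lam {x,y} \<noteq> lam {x,z}"
  using assms unfolding simple_temporal_clique_def by blast

lemma candm_unique:
  assumes "simple_temporal_clique V lam" "(u1,v) \<in> Eminus_cand V lam" "(u2,v) \<in> Eminus_cand V lam"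
  shows "u1 = u2"
proof (rule ccontr)
  assume ne: "u1 \<noteq> u2"
  have "lam {u1,v} \<le> lam {v,u2}" "lam {u2,v} \<le> lam {v,u1}" "u1 \<in> V" "u2 \<in> V" "v \<in> V" "u1 \<noteq> v" "u2 \<noteq> v"
    using assms ne unfolding Eminus_cand_def by auto
  then have "lam {v,u1} = lam {v,u2}" by (simp add: insert_commute)
  then show False using dlab[OF assms(1), of v u1 u2] \<open>u1 \<in> V\<close> \<open>u2 \<in> V\<close> \<open>v \<in> V\<close> \<open>u1 \<noteq> v\<close> \<open>u2 \<noteq> v\<close> ne by auto
qed

lemma candp_unique:
  assumes "simple_temporal_clique V lam" "(v,u1) \<in> Eplus_cand V lam" "(v,u2) \<in> Eplus_cand V lam"
  shows "u1 = u2"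
proof (rule ccontr)
  assume ne: "u1 \<noteq> u2"
  have "lam {v,u2} \<le> lam {v,u1}" "lam {v,u1} \<le> lam {v,u2}" "u1 \<in> V" "u2 \<in> V" "v \<in> V" "u1 \<noteq> v" "u2 \<noteq> v"
    using assms ne unfolding Eplus_cand_def by auto
  then have "lam {v,u1} = lam {v,u2}" by simp
  then show False using dlab[OF assms(1), of v u1 u2] \<open>u1 \<in> V\<close> \<open>u2 \<in> V\<close> \<open>v \<in> V\<close> \<open>u1 \<noteq> v\<close> \<open>u2 \<noteq> v\<close> ne by auto
qed

lemma card_candm:
  assumes "simple_temporal_clique V lam"
  shows "card (Eminus_cand V lam) \<le> card V"
proof -
  have "inj_on snd (Eminus_cand V lam)"
    using candm_unique[OF assms] by (force simp: inj_on_def)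
  moreover have "snd ` Eminus_cand V lam \<subseteq> V" unfolding Eminus_cand_def by auto
  moreover have "finite V" using assms unfolding simple_temporal_clique_def by auto
  ultimately show ?thesis by (meson card_inj_on_le)
qed

lemma card_candp:
  assumes "simple_temporal_clique V lam"
  shows "card (Eplus_cand V lam) \<le> card V"
proof -
  have "inj_on fst (Eplus_cand V lam)"
    using candp_unique[OF assms] by (force simp: inj_on_def)
  moreover have "fst ` Eplus_cand V lam \<subseteq> V" unfolding Eplus_cand_def by auto
  moreover have "finite V" using assms unfolding simple_temporal_clique_def by auto
  ultimately show ?thesis by (meson card_inj_on_le)
qed


lemma emit_noout:
  assumes fin: "finite Em" and u: "u \<in> emitters V (forward_T lam Em)" and uw: "(u,w) \<in> Em"
  shows False
proof -
  let ?N = "{w. (u,w) \<in> Em}"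
  have "?N \<subseteq> snd ` Em" by force
  then have "finite ?N" using fin finite_subset by blast
  moreover have "?N \<noteq> {}" using uw by auto
  ultimately obtain m where m: "m \<in> ?N" "\<forall>y\<in>?N. lam {u,y} \<le> lam {u,m}"
    using ex_max_img[of ?N "\<lambda>y. lam {u,y}"] by blast
  then have "(u,m) \<in> forward_T lam Em" unfolding forward_T_def by auto
  then show False using u unfolding emitters_def by auto
qed

lemma emit_bound:
  assumes cl: "simple_temporal_clique V lam" and vc: "valid_choice (Eminus_cand V lam) Em"
  shows "2 * card (emitters V (forward_T lam Em)) \<le> card V + 1"
proof -
  let ?X = "emitters V (forward_T lam Em)"
  have finV: "finite V" using cl unfolding simple_temporal_clique_def by auto
  have EmC: "Em \<subseteq> Eminus_cand V lam" using vc unfolding valid_choice_def by auto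
  have EmV: "Em \<subseteq> V \<times> V" using EmC unfolding Eminus_cand_def by auto
  have finEm: "finite Em" using EmV finV finite_subset by blast
  have XV: "?X \<subseteq> V" unfolding emitters_def by auto
  show ?thesis
  proof (cases "card V \<ge> 2")
    case False
    then have "card ?X \<le> 1" "card ?X \<le> card V" using card_mono[OF finV XV] by linarith+
    then show ?thesis by linarith
  next
    case True
    have par: "\<exists>v. (v,u) \<in> Em" if uX: "u \<in> ?X" for u
    proof -
      have uV: "u \<in> V" using uX XV by auto
      have "V - {u} \<noteq> {}"
      proof
        assume "V - {u} = {}"
        then have "V \<subseteq> {u}" by auto
        then have "card V \<le> 1" using card_mono[of "{u}" V] by (metis card_mono finite.emptyI finite.insertI is_singletonI is_singleton_altdef)
        then show False using True by linarith
      qed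
      then obtain z where z: "z \<in> V - {u}" "\<forall>y\<in>V-{u}. lam {u,z} \<le> lam {u,y}"
        using ex_min_img[of "V - {u}" "\<lambda>y. lam {u,y}"] finV by blast
      have "(z,u) \<in> Eminus_cand V lam"
        unfolding Eminus_cand_def using z uV by (auto simp: insert_commute)
      then have "(z,u) \<in> Em \<or> (u,z) \<in> Em" using vc unfolding valid_choice_def by auto
      then show ?thesis using emit_noout[OF finEm uX] by blast
    qed
    define p where "p u = (SOME v. (v,u) \<in> Em)" for u
    have pEm: "(p u, u) \<in> Em" if "u \<in> ?X" for u
      using par[OF that] unfolding p_def by (metis someI_ex)
    have pout: "p u \<in> V - ?X" if "u \<in> ?X" for u
      using pEm[OF that] EmV emit_noout[OF finEm, of "p u" V lam u] by blast
    have keep: "\<not> out_deg_ge2 Em v \<or> (\<forall>w. (v,w) \<in> Em \<longrightarrow> lam {v,w} \<le> lam {v,u})"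
      if "u \<in> ?X" "(v,u) \<in> Em" for u v
    proof (rule ccontr)
      assume "\<not> ?thesis"
      then have "(u,v) \<in> forward_T lam Em"
        using that emit_noout[OF finEm that(1)] unfolding forward_T_def by auto
      then show False using that(1) unfolding emitters_def by auto
    qed
    have inj: "inj_on p ?X"
    proof (rule inj_onI)
      fix u1 u2 assume u1: "u1 \<in> ?X" and u2: "u2 \<in> ?X" and eq: "p u1 = p u2"
      define v where "v = p u1"
      have a1: "(v,u1) \<in> Em" using pEm[OF u1] v_def by simp
      have a2: "(v,u2) \<in> Em" using pEm[OF u2] v_def eq by simp
      show "u1 = u2"
      proof (rule ccontr)
        assume ne: "u1 \<noteq> u2"
        then have od: "out_deg_ge2 Em v" using a1 a2 unfolding out_deg_ge2_def by blast
        have "lam {v,u2} \<le> lam {v,u1}" using keep[OF u1 a1] od a2 by blast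
        moreover have "lam {v,u1} \<le> lam {v,u2}" using keep[OF u2 a2] od a1 by blast
        ultimately have "lam {v,u1} = lam {v,u2}" by simp
        moreover have "v \<in> V" "u1 \<in> V" "u2 \<in> V" "v \<noteq> u1" "v \<noteq> u2"
          using a1 a2 EmC unfolding Eminus_cand_def by auto
        ultimately show False using dlab[OF cl, of v u1 u2] ne by auto
      qed
    qed
    have "card ?X \<le> card (V - ?X)"
      using card_inj_on_le[OF inj, of "V - ?X"] pout finV by blast
    moreover have "card (V - ?X) = card V - card ?X" using card_Diff_subset[OF finite_subset[OF XV finV] XV] .
    moreover have "card ?X \<le> card V" using card_mono[OF finV XV] .
    ultimately show ?thesis by linarith
  qed
qed


lemma coll_noin:
  assumes fin: "finite Ep" and u: "u \<in> collectors V (backward_T lam Ep)" and uw: "(w,u) \<in> Ep"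
  shows False
proof -
  let ?N = "{w. (w,u) \<in> Ep}"
  have "?N \<subseteq> fst ` Ep" by force
  then have "finite ?N" using fin finite_subset by blast
  moreover have "?N \<noteq> {}" using uw by auto
  ultimately obtain m where m: "m \<in> ?N" "\<forall>y\<in>?N. lam {m,u} \<le> lam {y,u}"
    using ex_min_img[of ?N "\<lambda>y. lam {y,u}"] by blast
  then have "(m,u) \<in> backward_T lam Ep" unfolding backward_T_def by auto
  then show False using u unfolding collectors_def by auto
qed

lemma coll_bound:
  assumes cl: "simple_temporal_clique V lam" and vc: "valid_choice (Eplus_cand V lam) Ep"
  shows "2 * card (collectors V (backward_T lam Ep)) \<le> card V + 1"
proof -
  let ?X = "collectors V (backward_T lam Ep)"
  have finV: "finite V" using cl unfolding simple_temporal_clique_def by auto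
  have EpC: "Ep \<subseteq> Eplus_cand V lam" using vc unfolding valid_choice_def by auto
  have EpV: "Ep \<subseteq> V \<times> V" using EpC unfolding Eplus_cand_def by auto
  have finEp: "finite Ep" using EpV finV finite_subset by blast
  have XV: "?X \<subseteq> V" unfolding collectors_def by auto
  show ?thesis
  proof (cases "card V \<ge> 2")
    case False
    then have "card ?X \<le> 1" "card ?X \<le> card V" using card_mono[OF finV XV] by linarith+
    then show ?thesis by linarith
  next
    case True
    have par: "\<exists>v. (u,v) \<in> Ep" if uX: "u \<in> ?X" for u
    proof -
      have uV: "u \<in> V" using uX XV by auto
      have "V - {u} \<noteq> {}"
      proof
        assume "V - {u} = {}"
        then have "V \<subseteq> {u}" by auto
        then have "card V \<le> 1" using card_mono[of "{u}" V] by (metis card_mono finite.emptyI finite.insertI is_singletonI is_singleton_altdef)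
        then show False using True by linarith
      qed
      then obtain z where z: "z \<in> V - {u}" "\<forall>y\<in>V-{u}. lam {u,y} \<le> lam {u,z}"
        using ex_max_img[of "V - {u}" "\<lambda>y. lam {u,y}"] finV by blast
      have "(u,z) \<in> Eplus_cand V lam"
        unfolding Eplus_cand_def using z uV by auto
      then have "(u,z) \<in> Ep \<or> (z,u) \<in> Ep" using vc unfolding valid_choice_def by auto
      then show ?thesis using coll_noin[OF finEp uX] by blast
    qed
    define p where "p u = (SOME v. (u,v) \<in> Ep)" for u
    have pEp: "(u, p u) \<in> Ep" if "u \<in> ?X" for u
      using par[OF that] unfolding p_def by (metis someI_ex)
    have pout: "p u \<in> V - ?X" if "u \<in> ?X" for u
      using pEp[OF that] EpV coll_noin[OF finEp, of "p u" V lam u] by blast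
    have keep: "\<not> in_deg_ge2 Ep v \<or> (\<forall>w. (w,v) \<in> Ep \<longrightarrow> lam {u,v} \<le> lam {w,v})"
      if "u \<in> ?X" "(u,v) \<in> Ep" for u v
    proof (rule ccontr)
      assume "\<not> ?thesis"
      then have "(v,u) \<in> backward_T lam Ep"
        using that coll_noin[OF finEp that(1)] unfolding backward_T_def by auto
      then show False using that(1) unfolding collectors_def by auto
    qed
    have inj: "inj_on p ?X"
    proof (rule inj_onI)
      fix u1 u2 assume u1: "u1 \<in> ?X" and u2: "u2 \<in> ?X" and eq: "p u1 = p u2"
      define v where "v = p u1"
      have a1: "(u1,v) \<in> Ep" using pEp[OF u1] v_def by simp
      have a2: "(u2,v) \<in> Ep" using pEp[OF u2] v_def eq by simp
      show "u1 = u2"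
      proof (rule ccontr)
        assume ne: "u1 \<noteq> u2"
        then have od: "in_deg_ge2 Ep v" using a1 a2 unfolding in_deg_ge2_def by blast
        have "lam {u1,v} \<le> lam {u2,v}" using keep[OF u1 a1] od a2 by blast
        moreover have "lam {u2,v} \<le> lam {u1,v}" using keep[OF u2 a2] od a1 by blast
        ultimately have "lam {v,u1} = lam {v,u2}" by (simp add: insert_commute)
        moreover have "v \<in> V" "u1 \<in> V" "u2 \<in> V" "v \<noteq> u1" "v \<noteq> u2"
          using a1 a2 EpC unfolding Eplus_cand_def by auto
        ultimately show False using dlab[OF cl, of v u1 u2] ne by auto
      qed
    qed
    have "card ?X \<le> card (V - ?X)"
      using card_inj_on_le[OF inj, of "V - ?X"] pout finV by blast
    moreover have "card (V - ?X) = card V - card ?X" using card_Diff_subset[OF finite_subset[OF XV finV] XV] .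
    moreover have "card ?X \<le> card V" using card_mono[OF finV XV] .
    ultimately show ?thesis by linarith
  qed
qed


lemma fT_sub: "forward_T lam Em \<subseteq> Em \<union> Em\<inverse>"
  unfolding forward_T_def by auto

lemma bT_sub: "backward_T lam Ep \<subseteq> Ep \<union> Ep\<inverse>"
  unfolding backward_T_def by auto

lemma card_T2:
  assumes "finite E" "T \<subseteq> E \<union> E\<inverse>"
  shows "card T \<le> 2 * card E"
proof -
  have "card T \<le> card (E \<union> E\<inverse>)" using assms card_mono by (metis finite_UnI finite_converse)
  also have "\<dots> \<le> card E + card (E\<inverse>)" by (rule card_Un_le)
  finally show ?thesis by (simp add: card_inverse)
qed

lemma img_pairs: "{{u,v} | u v. (u,v) \<in> A} = (\<lambda>(u,v). {u,v}) ` A"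
  by auto

lemma main_nat:
  assumes cl: "simple_temporal_clique V lam"
    and vm: "valid_choice (Eminus_cand V lam) Em"
    and vp: "valid_choice (Eplus_cand V lam) Ep"
  shows "4 * card (fireworks_cover V lam Em Ep) \<le> card V * (card V - 1) + 20 * card V"
proof -
  define n where "n = card V"
  define EmT where "EmT = forward_T lam Em"
  define EpT where "EpT = backward_T lam Ep"
  define Xm where "Xm = emitters V EmT"
  define Xp where "Xp = collectors V EpT"
  have finV: "finite V" using cl unfolding simple_temporal_clique_def by auto
  have EmC: "Em \<subseteq> Eminus_cand V lam" using vm unfolding valid_choice_def by auto
  have EpC: "Ep \<subseteq> Eplus_cand V lam" using vp unfolding valid_choice_def by auto
  have EmV: "Em \<subseteq> V \<times> V" using EmC unfolding Eminus_cand_def by auto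
  have EpV: "Ep \<subseteq> V \<times> V" using EpC unfolding Eplus_cand_def by auto
  have finEm: "finite Em" using EmV finV finite_subset by blast
  have finEp: "finite Ep" using EpV finV finite_subset by blast
  have fcm: "finite (Eminus_cand V lam)"
    by (rule finite_subset[of _ "V \<times> V"]) (auto simp: Eminus_cand_def finV)
  have fcp: "finite (Eplus_cand V lam)"
    by (rule finite_subset[of _ "V \<times> V"]) (auto simp: Eplus_cand_def finV)
  have cEm: "card Em \<le> n" using card_mono[OF fcm EmC] card_candm[OF cl] n_def by linarith
  have cEp: "card Ep \<le> n" using card_mono[OF fcp EpC] card_candp[OF cl] n_def by linarith
  have cEmT: "card EmT \<le> 2 * n" using card_T2[OF finEm fT_sub[of lam]] cEm EmT_def by fastforce
  have cEpT: "card EpT \<le> 2 * n" using card_T2[OF finEp bT_sub[of lam]] cEp EpT_def by fastforce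
  have bx: "2 * card Xm \<le> n + 1" using emit_bound[OF cl vm] Xm_def EmT_def n_def by simp
  have by': "2 * card Xp \<le> n + 1" using coll_bound[OF cl vp] Xp_def EpT_def n_def by simp
  have xn: "card Xm \<le> n" unfolding Xm_def n_def emitters_def by (rule card_mono[OF finV]) auto
  have finXm: "finite Xm" unfolding Xm_def emitters_def using finV by auto
  have finXp: "finite Xp" unfolding Xp_def collectors_def using finV by auto
  have finT: "finite (EmT \<union> EpT)" using finEm finEp fT_sub bT_sub EmT_def EpT_def
    by (metis finite_UnI finite_converse finite_subset)
  have S: "fireworks_cover V lam Em Ep = (\<lambda>(u,v). {u,v}) ` (EmT \<union> EpT) \<union>
      {{u,v} | u v. u \<in> Xm \<and> v \<in> Xp \<and> u \<noteq> v}"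
    unfolding fireworks_cover_def Let_def EmT_def[symmetric] EpT_def[symmetric] Xm_def[symmetric] Xp_def[symmetric]
    by (simp only: img_pairs)
  have sub3: "{{u,v} | u v. u \<in> Xm \<and> v \<in> Xp \<and> u \<noteq> v} \<subseteq> (\<lambda>(u,v). {u,v}) ` (Xm \<times> Xp)"
    by force
  have c3: "card {{u,v} | u v. u \<in> Xm \<and> v \<in> Xp \<and> u \<noteq> v} \<le> card Xm * card Xp"
  proof -
    have "card {{u,v} | u v. u \<in> Xm \<and> v \<in> Xp \<and> u \<noteq> v} \<le> card ((\<lambda>(u,v). {u,v}) ` (Xm \<times> Xp))"
      using sub3 finXm finXp by (intro card_mono) auto
    also have "\<dots> \<le> card (Xm \<times> Xp)" by (rule card_image_le) (use finXm finXp in auto)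
    finally show ?thesis by (simp add: card_cartesian_product)
  qed
  have c1: "card ((\<lambda>(u,v). {u,v}) ` (EmT \<union> EpT)) \<le> 4 * n"
  proof -
    have "card ((\<lambda>(u,v). {u,v}) ` (EmT \<union> EpT)) \<le> card (EmT \<union> EpT)" using finT card_image_le by blast
    also have "\<dots> \<le> card EmT + card EpT" by (rule card_Un_le)
    finally show ?thesis using cEmT cEpT by linarith
  qed
  have cS: "card (fireworks_cover V lam Em Ep) \<le> 4 * n + card Xm * card Xp"
  proof -
    have "card (fireworks_cover V lam Em Ep) \<le> card ((\<lambda>(u,v). {u,v}) ` (EmT \<union> EpT)) +
      card {{u,v} | u v. u \<in> Xm \<and> v \<in> Xp \<and> u \<noteq> v}" unfolding S by (rule card_Un_le)
    then show ?thesis using c1 c3 by linarith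
  qed
  have prod: "4 * (card Xm * card Xp) \<le> n * (n - 1) + 4 * n"
  proof (cases "n = 0")
    case True then show ?thesis using xn by simp
  next
    case False
    have "(2 * card Xm) * (2 * card Xp) \<le> (n+1) * (n+1)" using bx by' by (rule mult_le_mono)
    moreover have "(n+1)*(n+1) \<le> n * (n - 1) + 4 * n" using False
      by (cases n) (auto simp: algebra_simps)
    ultimately show ?thesis by (simp add: algebra_simps)
  qed
  show ?thesis unfolding n_def[symmetric] using cS prod by linarith
qed

theorem theorem7:
  shows "\<exists>C::real. \<forall>V lam Em Ep.
           simple_temporal_clique V lam \<and>
           valid_choice (Eminus_cand V lam) Em \<and>
           valid_choice (Eplus_cand V lam) Ep \<longrightarrow>
           real (card (fireworks_cover V lam Em Ep))
             \<le> (1/2) * real (card V choose 2) + C * real (card V)"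
proof (intro exI allI impI)
  fix V lam Em Ep
  assume a: "simple_temporal_clique V lam \<and>
           valid_choice (Eminus_cand V lam) Em \<and>
           valid_choice (Eplus_cand V lam) Ep"
  define n where "n = card V"
  define s where "s = card (fireworks_cover V lam Em Ep)"
  have h: "4 * s \<le> n * (n - 1) + 20 * n" using main_nat a n_def s_def by blast
  have ev: "even (n * (n - 1))" by (cases n) auto
  have ch: "2 * (n choose 2) = n * (n - 1)" using ev by (simp add: choose_two)
  have "real (4 * s) \<le> real (n * (n - 1) + 20 * n)" using h by linarith
  then have "4 * real s \<le> real (2 * (n choose 2)) + 20 * real n" using ch by simp
  then have "real s \<le> (1/2) * real (n choose 2) + 5 * real n" by simp
  then show "real (card (fireworks_cover V lam Em Ep))
             \<le> (1/2) * real (card V choose 2) + 5 * real (card V)" using n_def s_def by simp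
qed

end
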